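(* Let $A$ be an $n\times m$ matrix with entries in $[0,1]$, and suppose the row player follows follow-the-regularized-leader with a regularizer $R:\Delta_n\to\mathbb{R}$, i.e. $x_t=\arg\min_{x\in\Delta_n}x^\top\big(\sum_{i=1}^{t-1}Ay_i\big)+R(x)$, where the minimizer is assumed to be unique at every round. If there exists a fully mixed (all entries positive) minimax strategy of the row player, then this algorithm has the stability property: for every minimax strategy $y^*$ of the column player and every round $t$, if $y_t=y^*$ then $x_{t+1}=x_t$.
   Context: Repeated two-player zero-sum game: at round $t$ the row player plays $x_t\in\Delta_n$ and the column player $y_t\in\Delta_m$; the row player minimizes, the column player maximizes $x_t^\top Ay_t$. $v$ is the value of the game; a minimax strategy of the row player is $x$ with $\max_{y\in\Delta_m}x^\top Ay=v$, and of the column player is $y$ with $\min_{x\in\Delta_n}x^\top Ay=v$. *)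

theory Defs
  imports Complex_Main
begin

definition simplex :: "('i::finite \<Rightarrow> real) set" where
  "simplex = {x. (\<forall>i. 0 \<le> x i) \<and> (\<Sum>i\<in>UNIV. x i) = 1}"

definition payoff :: "('i::finite \<Rightarrow> 'j::finite \<Rightarrow> real) \<Rightarrow> ('i \<Rightarrow> real) \<Rightarrow> ('j \<Rightarrow> real) \<Rightarrow> real" where
  "payoff A x y = (\<Sum>i\<in>UNIV. \<Sum>j\<in>UNIV. x i * A i j * y j)"

definition mat_vec :: "('i::finite \<Rightarrow> 'j::finite \<Rightarrow> real) \<Rightarrow> ('j \<Rightarrow> real) \<Rightarrow> 'i \<Rightarrow> real" where
  "mat_vec A y = (\<lambda>i. \<Sum>j\<in>UNIV. A i j * y j)"

definition game_value :: "('i::finite \<Rightarrow> 'j::finite \<Rightarrow> real) \<Rightarrow> real" where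
  "game_value A = (INF x\<in>simplex. SUP y\<in>simplex. payoff A x y)"

definition row_minimax :: "('i::finite \<Rightarrow> 'j::finite \<Rightarrow> real) \<Rightarrow> ('i \<Rightarrow> real) \<Rightarrow> bool" where
  "row_minimax A x \<longleftrightarrow> x \<in> simplex \<and> (SUP y\<in>simplex. payoff A x y) = game_value A"

definition col_minimax :: "('i::finite \<Rightarrow> 'j::finite \<Rightarrow> real) \<Rightarrow> ('j \<Rightarrow> real) \<Rightarrow> bool" where
  "col_minimax A y \<longleftrightarrow> y \<in> simplex \<and> (INF x\<in>simplex. payoff A x y) = game_value A"

definition cum_loss :: "('i::finite \<Rightarrow> 'j::finite \<Rightarrow> real) \<Rightarrow> (nat \<Rightarrow> 'j \<Rightarrow> real) \<Rightarrow> nat \<Rightarrow> 'i \<Rightarrow> real" where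
  "cum_loss A y t = (\<lambda>k. \<Sum>s\<in>{1..<t}. mat_vec A (y s) k)"

definition ftrl_min :: "(('i::finite \<Rightarrow> real) \<Rightarrow> real) \<Rightarrow> ('i \<Rightarrow> real) \<Rightarrow> ('i \<Rightarrow> real) \<Rightarrow> bool" where
  "ftrl_min R L x \<longleftrightarrow> x \<in> simplex \<and>
     (\<forall>x'\<in>simplex. (\<Sum>k\<in>UNIV. x k * L k) + R x \<le> (\<Sum>k\<in>UNIV. x' k * L k) + R x')"

end

theory Submission
  imports Defs
begin

lemma payoff_mv: "payoff A x y = (\<Sum>i\<in>UNIV. x i * mat_vec A y i)"
  unfolding payoff_def mat_vec_def by (simp add: sum_distrib_left mult.assoc)

lemma payoff_nonneg:
  assumes "\<And>i j. 0 \<le> A i j" "x \<in> simplex" "y \<in> simplex"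
  shows "0 \<le> payoff A x y"
  using assms unfolding payoff_def simplex_def by (auto intro!: sum_nonneg)

lemma payoff_le1:
  assumes "\<And>i j. A i j \<le> 1" "x \<in> simplex" "y \<in> simplex"
  shows "payoff A x y \<le> 1"
proof -
  have "payoff A x y \<le> (\<Sum>i\<in>UNIV. \<Sum>j\<in>UNIV. x i * y j)"
    unfolding payoff_def
  proof (intro sum_mono)
    fix i j
    have "x i * A i j \<le> x i * 1" using assms unfolding simplex_def by (intro mult_left_mono) auto
    thus "x i * A i j * y j \<le> x i * y j" using assms unfolding simplex_def
      by (simp add: mult_right_mono)
  qed
  also have "\<dots> = (\<Sum>i\<in>UNIV. x i) * (\<Sum>j\<in>UNIV. y j)"
    by (simp add: sum_product)
  also have "\<dots> = 1" using assms unfolding simplex_def by simp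
  finally show ?thesis .
qed

theorem theorem19:
  fixes A :: "'n::finite \<Rightarrow> 'm::finite \<Rightarrow> real"
    and R :: "('n \<Rightarrow> real) \<Rightarrow> real"
    and x :: "nat \<Rightarrow> 'n \<Rightarrow> real"
    and y :: "nat \<Rightarrow> 'm \<Rightarrow> real"
    and ystar :: "'m \<Rightarrow> real"
    and t :: nat
  assumes entries: "\<And>i j. 0 \<le> A i j \<and> A i j \<le> 1"
    and ys: "\<And>s. s \<ge> 1 \<Longrightarrow> y s \<in> simplex"
    and ftrl: "\<And>s. s \<ge> 1 \<Longrightarrow> ftrl_min R (cum_loss A y s) (x s)"
    and unique: "\<And>s x'. s \<ge> 1 \<Longrightarrow> ftrl_min R (cum_loss A y s) x' \<Longrightarrow> x' = x s"
    and mixed: "\<exists>xs. row_minimax A xs \<and> (\<forall>i. xs i > 0)"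
    and ystar: "col_minimax A ystar"
    and t: "t \<ge> 1"
    and yt: "y t = ystar"
  shows "x (Suc t) = x t"
proof -
  define v where "v = game_value A"
  obtain xs where xs: "row_minimax A xs" "\<And>i. xs i > 0" using mixed by blast
  have xsS: "xs \<in> simplex" and xsv: "(SUP y\<in>simplex. payoff A xs y) = v"
    using xs(1) unfolding row_minimax_def v_def by auto
  have ysS: "ystar \<in> simplex" and ysv: "(INF x\<in>simplex. payoff A x ystar) = v"
    using ystar unfolding col_minimax_def v_def by auto
  have bda: "bdd_above ((\<lambda>y. payoff A xs y) ` simplex)"
    using payoff_le1[OF _ xsS] entries by (auto intro!: bdd_aboveI[where M=1])
  have bdb: "bdd_below ((\<lambda>x. payoff A x ystar) ` simplex)"
    using payoff_nonneg[OF _ _ ysS] entries by (auto intro!: bdd_belowI[where m=0])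
  have le1: "payoff A xs ystar \<le> v"
    using cSUP_upper[OF ysS bda] xsv by simp
  have ge: "v \<le> payoff A x' ystar" if "x' \<in> simplex" for x'
    using cINF_lower[OF bdb that] ysv by simp
  have row: "v \<le> mat_vec A ystar i" for i
  proof -
    define e where "e = (\<lambda>k. if k = i then 1 else (0::real))"
    have "e \<in> simplex" unfolding simplex_def e_def by simp
    moreover have "payoff A e ystar = mat_vec A ystar i"
      unfolding payoff_mv e_def by (simp add: if_distrib[where f="\<lambda>c. c * _"] cong: if_cong)
    ultimately show ?thesis using ge by metis
  qed
  have sxs: "(\<Sum>i\<in>UNIV. xs i) = 1" using xsS unfolding simplex_def by simp
  have "(\<Sum>i\<in>UNIV. xs i * (mat_vec A ystar i - v)) = payoff A xs ystar - v"
    unfolding payoff_mv by (simp add: right_diff_distrib sum_subtractf sum_distrib_right[symmetric] sxs)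
  also have "\<dots> \<le> 0" using le1 by simp
  finally have s0: "(\<Sum>i\<in>UNIV. xs i * (mat_vec A ystar i - v)) \<le> 0" .
  have nn: "\<forall>i\<in>UNIV. 0 \<le> xs i * (mat_vec A ystar i - v)"
    using row xs(2) by (simp add: less_imp_le)
  have "(\<Sum>i\<in>UNIV. xs i * (mat_vec A ystar i - v)) = 0"
    using s0 sum_nonneg[of UNIV "\<lambda>i. xs i * (mat_vec A ystar i - v)"] nn by auto
  hence "\<forall>i\<in>UNIV. xs i * (mat_vec A ystar i - v) = 0"
    using sum_nonneg_eq_0_iff[of UNIV "\<lambda>i. xs i * (mat_vec A ystar i - v)"] nn by simp
  hence zz: "xs i * (mat_vec A ystar i - v) = 0" for i by simp
  have eqv: "mat_vec A ystar i = v" for i using zz[of i] xs(2)[of i] by simp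
  have cl: "cum_loss A y (Suc t) k = cum_loss A y t k + v" for k
  proof -
    have "{1..<Suc t} = insert t {1..<t}" using t by auto
    thus ?thesis unfolding cum_loss_def using yt eqv by (simp add: add.commute)
  qed
  have fm: "ftrl_min R (cum_loss A y t) (x t)" using ftrl t by simp
  have sumx: "(\<Sum>k\<in>UNIV. z k * cum_loss A y (Suc t) k) = (\<Sum>k\<in>UNIV. z k * cum_loss A y t k) + v"
    if "z \<in> simplex" for z
  proof -
    have "(\<Sum>k\<in>UNIV. z k) = 1" using that unfolding simplex_def by simp
    thus ?thesis unfolding cl by (simp add: distrib_left sum.distrib sum_distrib_right[symmetric])
  qed
  have "ftrl_min R (cum_loss A y (Suc t)) (x t)"
    unfolding ftrl_min_def
  proof (intro conjI ballI)
    show xt: "x t \<in> simplex" using fm unfolding ftrl_min_def by simp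
    fix x' :: "'n \<Rightarrow> real" assume x': "x' \<in> simplex"
    have "(\<Sum>k\<in>UNIV. x t k * cum_loss A y t k) + R (x t) \<le> (\<Sum>k\<in>UNIV. x' k * cum_loss A y t k) + R x'"
      using fm x' unfolding ftrl_min_def by blast
    thus "(\<Sum>k\<in>UNIV. x t k * cum_loss A y (Suc t) k) + R (x t) \<le> (\<Sum>k\<in>UNIV. x' k * cum_loss A y (Suc t) k) + R x'"
      unfolding sumx[OF xt] sumx[OF x'] by linarith
  qed
  thus ?thesis using unique[of "Suc t"] by simp
qed

end
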